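(* Let $n,b$ be integers with $1<n<b$, let $p=(d_k,\ldots,d_0)_b=n\cdot(d_{\sigma(k)},\ldots,d_{\sigma(0)})_b$ be an $(n,b,\sigma)$-permutiple with carries $c_k,\ldots,c_1,c_0=0$, and let $S=\bigl((c_0,c_1),\ldots,(c_{k-1},c_k),(c_k,c_0)\bigr)$ be its state-transition sequence. Let $\varphi$ be a symmetry of $p$ which fixes $S$, and let $\psi$ be the $(k+1)$-cycle $(0,1,\ldots,k)$. (a) If $0\le j\le k$ and $c_j=0$ (so that $p_{\psi^j}$ is a rotational sibling of $p$), then $\varphi\psi^j$ is also a symmetry of $p$; in particular $(d_{\varphi\psi^j(k)},\ldots,d_{\varphi\psi^j(0)})_b=n\cdot(d_{\sigma\varphi\psi^j(k)},\ldots,d_{\sigma\varphi\psi^j(0)})_b$ is an $(n,b,\psi^{-j}\varphi^{-1}\sigma\varphi\psi^j)$-permutiple. (b) If $0<j\le k$ and $c_j=n-1$ (so that $\overline{p}_{\psi^j}$ is a reflective sibling of $p$), then $(\overline{d}_{\varphi\psi^j(k)},\ldots,\overline{d}_{\varphi\psi^j(0)})_b=n\cdot(\overline{d}_{\sigma\varphi\psi^j(k)},\ldots,\overline{d}_{\sigma\varphi\psi^j(0)})_b$, i.e. this number is an $(n,b,\psi^{-j}\varphi^{-1}\sigma\varphi\psi^j)$-permutiple.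
   Context: For digits $0\le e_i<b$, $(e_k,\ldots,e_0)_b=\sum_ie_ib^i$ (leading zero digits allowed). For a permutation $\tau$ of $\{0,\ldots,k\}$, $(e_k,\ldots,e_0)_b$ is an $(n,b,\tau)$-permutiple if $(e_k,\ldots,e_0)_b=n\cdot(e_{\tau(k)},\ldots,e_{\tau(0)})_b$. The carries of $p$ are $c_0=0$, $c_{i+1}=\lfloor (nd_{\sigma(i)}+c_i)/b\rfloor$ for $0\le i\le k$ (so $c_{k+1}=0$ and $n d_{\sigma(i)}-d_i+c_i=bc_{i+1}$). The permutiple string of $p$ is $s=(d_0,d_{\sigma(0)})\cdots(d_k,d_{\sigma(k)})$. A permutation $\varphi$ of $\{0,\ldots,k\}$ is a symmetry of $p$ if $(d_{\varphi(k)},\ldots,d_{\varphi(0)})_b=n\cdot(d_{\sigma\varphi(k)},\ldots,d_{\sigma\varphi(0)})_b$ (reordering the inputs of $s$ by $\varphi$ yields another permutiple string). A symmetry $\varphi$ fixes $S$ if $S_\varphi=S$, where $S_\varphi=\bigl((c_{\varphi(0)},c_{\varphi(1)}),\ldots,(c_{\varphi(k-1)},c_{\varphi(k)}),(c_{\varphi(k)},c_{\varphi(0)})\bigr)$ is the state-transition (carry) sequence of the reordered string. $\psi(i)=i+1$ for $i<k$, $\psi(k)=0$. For a digit $d$, $\overline d=b-1-d$. The rotational sibling $p_{\psi^j}$ (for $c_j=0$) is $(d_{\psi^j(k)},\ldots,d_{\psi^j(0)})_b=n\cdot(d_{\sigma\psi^j(k)},\ldots,d_{\sigma\psi^j(0)})_b$,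 and the reflective sibling $\overline{p}_{\psi^j}$ (for $c_j=n-1$) is $(\overline d_{\psi^j(k)},\ldots,\overline d_{\psi^j(0)})_b=n\cdot(\overline d_{\sigma\psi^j(k)},\ldots,\overline d_{\sigma\psi^j(0)})_b$. *)

theory Defs
  imports "HOL-Combinatorics.Permutations"
begin

definition numval :: "nat \<Rightarrow> nat \<Rightarrow> (nat \<Rightarrow> nat) \<Rightarrow> nat" where
  "numval b k e = (\<Sum>i\<le>k. e i * b ^ i)"

definition is_permutiple :: "nat \<Rightarrow> nat \<Rightarrow> nat \<Rightarrow> (nat \<Rightarrow> nat) \<Rightarrow> (nat \<Rightarrow> nat) \<Rightarrow> bool" where
  "is_permutiple n b k e \<tau> \<longleftrightarrow>
     \<tau> permutes {0..k} \<and> (\<forall>i\<le>k. e i < b) \<and>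
     numval b k e = n * numval b k (e \<circ> \<tau>)"

fun carry :: "nat \<Rightarrow> nat \<Rightarrow> (nat \<Rightarrow> nat) \<Rightarrow> (nat \<Rightarrow> nat) \<Rightarrow> nat \<Rightarrow> nat" where
  "carry n b d \<sigma> 0 = 0"
| "carry n b d \<sigma> (Suc i) = (n * d (\<sigma> i) + carry n b d \<sigma> i) div b"

definition is_symmetry :: "nat \<Rightarrow> nat \<Rightarrow> nat \<Rightarrow> (nat \<Rightarrow> nat) \<Rightarrow> (nat \<Rightarrow> nat) \<Rightarrow> (nat \<Rightarrow> nat) \<Rightarrow> bool" where
  "is_symmetry n b k d \<sigma> \<phi> \<longleftrightarrow>
     \<phi> permutes {0..k} \<and> numval b k (d \<circ> \<phi>) = n * numval b k (d \<circ> \<sigma> \<circ> \<phi>)"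

definition trans_seq :: "(nat \<Rightarrow> nat) \<Rightarrow> nat \<Rightarrow> (nat \<Rightarrow> nat) \<Rightarrow> (nat \<times> nat) list" where
  "trans_seq c k \<phi> = map (\<lambda>i. (c (\<phi> i), c (\<phi> (if i < k then i + 1 else 0)))) [0..<Suc k]"

definition cyc :: "nat \<Rightarrow> nat \<Rightarrow> nat" where
  "cyc k i = (if i < k then i + 1 else if i = k then 0 else i)"

definition dbar :: "nat \<Rightarrow> nat \<Rightarrow> nat" where
  "dbar b x = b - 1 - x"

end

theory Submission imports Defs begin

lemma tele:
  fixes e f C :: "nat \<Rightarrow> int" and n b :: int
  assumes "\<forall>i<m. n * f i + C i = e i + b * C (Suc i)"
  shows "n * (\<Sum>i<m. f i * b^i) + C 0 = (\<Sum>i<m. e i * b^i) + b^m * C m"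
  using assms
proof (induction m)
  case 0 then show ?case by simp
next
  case (Suc m)
  then have IH: "n * (\<Sum>i<m. f i * b^i) + C 0 = (\<Sum>i<m. e i * b^i) + b^m * C m" by simp
  have R: "n * f m + C m = e m + b * C (Suc m)" using Suc.prems by simp
  have "n * (\<Sum>i<Suc m. f i * b^i) + C 0 = n * (\<Sum>i<m. f i * b^i) + C 0 + b^m * (n * f m)"
    by (simp add: algebra_simps)
  also have "\<dots> = (\<Sum>i<m. e i * b^i) + b^m * (n * f m + C m)" using IH by (simp add: algebra_simps)
  also have "\<dots> = (\<Sum>i<Suc m. e i * b^i) + b^Suc m * C (Suc m)" using R by (simp add: algebra_simps)
  finally show ?case .
qed

lemma mod_step: "Suc (i + j) mod Suc k = (if (i+j) mod Suc k = k then 0 else Suc ((i+j) mod Suc k))"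
  by (simp add: mod_Suc)

lemma rot:
  fixes e f C :: "nat \<Rightarrow> int" and n b :: int
  assumes rel: "\<forall>i\<le>k. n * f i + C i = e i + b * C (Suc i)"
    and wrap: "C (Suc k) = C 0" and "j \<le> k" and Cj: "C j = 0"
  shows "n * (\<Sum>i\<le>k. f ((i+j) mod Suc k) * b^i) = (\<Sum>i\<le>k. e ((i+j) mod Suc k) * b^i)"
proof -
  define C' where "C' i = C ((i+j) mod Suc k)" for i
  have "\<forall>i<Suc k. n * f ((i+j) mod Suc k) + C' i = e ((i+j) mod Suc k) + b * C' (Suc i)"
  proof (intro allI impI)
    fix i assume "i < Suc k"
    define m where "m = (i+j) mod Suc k"
    have mk: "m \<le> k" unfolding m_def using less_Suc_eq_le by auto
    have "C' (Suc i) = C (Suc m)"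
      unfolding C'_def m_def using mod_step[of i j k] wrap mk by (auto simp: m_def)
    then show "n * f ((i+j) mod Suc k) + C' i = e ((i+j) mod Suc k) + b * C' (Suc i)"
      using rel mk unfolding C'_def m_def by auto
  qed
  from tele[OF this] have "n * (\<Sum>i<Suc k. f ((i+j) mod Suc k) * b^i) + C' 0
      = (\<Sum>i<Suc k. e ((i+j) mod Suc k) * b^i) + b^Suc k * C' (Suc k)" .
  moreover have "(Suc k + j) mod Suc k = j" using \<open>j \<le> k\<close> by (metis mod_add_self1 mod_less le_imp_less_Suc)
  then have "C' 0 = 0" "C' (Suc k) = 0" using Cj \<open>j \<le> k\<close> unfolding C'_def
    by (auto simp del: mod_add_self1)
  ultimately show ?thesis by (simp add: lessThan_Suc_atMost)
qed


lemma low_bound: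
  fixes e :: "nat \<Rightarrow> nat"
  assumes "\<forall>i<m. e i < b"
  shows "(\<Sum>i<m. e i * b^i) < b^m"
  using assms
proof (induction m)
  case 0 then show ?case by simp
next
  case (Suc m)
  then have IH: "(\<Sum>i<m. e i * b^i) < b^m" and em: "e m < b" by auto
  then have X: "e m * b^m \<le> (b - 1) * b^m" by simp
  have "(\<Sum>i<Suc m. e i * b^i) = (\<Sum>i<m. e i * b^i) + e m * b^m" by simp
  also have "\<dots> < b^m + (b-1) * b^m" using IH X by linarith
  finally have "(\<Sum>i<Suc m. e i * b^i) < b^m + (b-1) * b^m" .
  also have "\<dots> = b^Suc m" using em by (cases b) (auto simp: algebra_simps)
  finally show ?case .
qed

lemma split_sum:
  fixes f :: "nat \<Rightarrow> nat"
  assumes "m \<le> Suc k"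
  shows "(\<Sum>i\<le>k. f i * b^i) = (\<Sum>i<m. f i * b^i) + b^m * (\<Sum>i\<in>{m..k}. f i * b^(i-m))"
proof -
  have E: "{..k} = {..<m} \<union> {m..k}" using assms by auto
  have "(\<Sum>i\<le>k. f i * b^i) = (\<Sum>i\<in>{..<m} \<union> {m..k}. f i * b^i)" by (simp only: E)
  also have "\<dots> = (\<Sum>i<m. f i * b^i) + (\<Sum>i\<in>{m..k}. f i * b^i)"
    by (rule sum.union_disjoint) auto
  finally have "(\<Sum>i\<le>k. f i * b^i) = (\<Sum>i<m. f i * b^i) + (\<Sum>i\<in>{m..k}. f i * b^i)" .
  moreover have "(\<Sum>i\<in>{m..k}. f i * b^i) = b^m * (\<Sum>i\<in>{m..k}. f i * b^(i-m))"
    by (simp add: sum_distrib_left algebra_simps flip: power_add)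
  ultimately show ?thesis by simp
qed

lemma numval_mod:
  assumes "\<forall>i\<le>k. e i < b" "m \<le> Suc k"
  shows "numval b k e mod b^m = (\<Sum>i<m. e i * b^i)"
proof -
  have "(\<Sum>i<m. e i * b^i) < b^m" using assms by (intro low_bound) auto
  then show ?thesis unfolding numval_def split_sum[OF assms(2)] by simp
qed

lemma carry_rel:
  fixes n b k :: nat and d \<tau> e :: "nat \<Rightarrow> nat"
  assumes b: "0 < b" and n: "0 < n"
    and eb: "\<forall>i\<le>k. e i < b" and fb: "\<forall>i\<le>k. d (\<tau> i) < b"
    and eq: "numval b k e = n * numval b k (d \<circ> \<tau>)"
  shows "\<forall>i\<le>k. n * d (\<tau> i) + carry n b d \<tau> i = e i + b * carry n b d \<tau> (Suc i)"
    and "carry n b d \<tau> (Suc k) = 0"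
    and "\<forall>i\<le>Suc k. carry n b d \<tau> i < n"
proof -
  let ?c = "carry n b d \<tau>"
  define r where "r i = (n * d (\<tau> i) + ?c i) mod b" for i
  have rel: "n * d (\<tau> i) + ?c i = r i + b * ?c (Suc i)" for i
    unfolding r_def by simp
  have rb: "\<forall>i<m. r i < b" for m unfolding r_def using b by simp
  have tel: "n * (\<Sum>i<m. d (\<tau> i) * b^i) = (\<Sum>i<m. r i * b^i) + b^m * ?c m" for m
  proof -
    have "int n * (\<Sum>i<m. int (d (\<tau> i)) * int b^i) + int (?c 0)
        = (\<Sum>i<m. int (r i) * int b^i) + int b^m * int (?c m)"
      by (rule tele) (metis (mono_tags) rel of_nat_add of_nat_mult)
    then have "int (n * (\<Sum>i<m. d (\<tau> i) * b^i)) = int ((\<Sum>i<m. r i * b^i) + b^m * ?c m)"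
      by simp
    then show ?thesis by (simp only: of_nat_eq_iff)
  qed
  have low: "(\<Sum>i<m. r i * b^i) = (\<Sum>i<m. e i * b^i)" if m: "m \<le> Suc k" for m
  proof -
    have "numval b k e mod b^m = (\<Sum>i<m. e i * b^i)" using numval_mod[OF eb m] .
    moreover have "numval b k e mod b^m = (n * (\<Sum>i<m. d (\<tau> i) * b^i)) mod b^m"
    proof -
      have S: "numval b k (d \<circ> \<tau>) = (\<Sum>i<m. d (\<tau> i) * b^i) + b^m * (\<Sum>i\<in>{m..k}. d (\<tau> i) * b^(i-m))"
        unfolding numval_def using split_sum[OF m, where f="d \<circ> \<tau>" and b=b] by simp
      show ?thesis unfolding eq S by (simp add: distrib_left mult.left_commute[of n "b^m"])
    qed
    moreover have "(n * (\<Sum>i<m. d (\<tau> i) * b^i)) mod b^m = (\<Sum>i<m. r i * b^i)"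
      unfolding tel using low_bound[OF rb] by simp
    ultimately show ?thesis by simp
  qed
  have req: "r i = e i" if "i \<le> k" for i
  proof -
    have "(\<Sum>i<Suc i. r i * b^i) = (\<Sum>i<Suc i. e i * b^i)" using low[of "Suc i"] that by simp
    then have "r i * b^i = e i * b^i" using low[of i] that by simp
    then show ?thesis using b by simp
  qed
  show "\<forall>i\<le>k. n * d (\<tau> i) + ?c i = e i + b * ?c (Suc i)" using rel req by (metis (no_types))
  have "n * numval b k (d \<circ> \<tau>) = (\<Sum>i<Suc k. r i * b^i) + b^Suc k * ?c (Suc k)"
    using tel[of "Suc k"] unfolding numval_def by (simp add: lessThan_Suc_atMost)
  then have "numval b k e = numval b k e + b^Suc k * ?c (Suc k)"
    using low[of "Suc k"] eq unfolding numval_def by (simp add: lessThan_Suc_atMost)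
  then show "?c (Suc k) = 0" using b by simp
  show "\<forall>i\<le>Suc k. ?c i < n"
  proof (intro allI impI)
    fix i assume "i \<le> Suc k" then show "?c i < n"
    proof (induction i)
      case 0 then show ?case using n by simp
    next
      case (Suc i)
      then have ci: "?c i < n" and "d (\<tau> i) < b" using fb by auto
      then have "d (\<tau> i) \<le> b - 1" by simp
      then have "n * d (\<tau> i) \<le> n * (b - 1)" by simp
      moreover have "n * (b - 1) = n * b - n" by (simp add: diff_mult_distrib2)
      moreover have "n \<le> n * b" using b by simp
      ultimately have "n * d (\<tau> i) + ?c i < n * b" using ci by linarith
      then show ?case by (simp add: less_mult_imp_div_less)
    qed
  qed
qed


lemma cyc_pow: "i \<le> k \<Longrightarrow> (cyc k ^^ j) i = (i + j) mod Suc k"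
proof (induction j)
  case 0 then show ?case by simp
next
  case (Suc j)
  have m: "(i + j) mod Suc k \<le> k" using less_Suc_eq_le by auto
  have m2: "(i+j) mod Suc k < k \<or> (i+j) mod Suc k = k" using m by linarith
  show ?case using Suc m2 mod_step[of i j k] by (auto simp: cyc_def)
qed

lemma cyc_permutes: "cyc k permutes {0..k}"
proof (rule bij_imp_permutes)
  show "bij_betw (cyc k) {0..k} {0..k}"
  proof (rule bij_betw_imageI)
    show "inj_on (cyc k) {0..k}" unfolding inj_on_def cyc_def by auto
    show "cyc k ` {0..k} = {0..k}"
    proof
      show "cyc k ` {0..k} \<subseteq> {0..k}" unfolding cyc_def by auto
      show "{0..k} \<subseteq> cyc k ` {0..k}"
      proof
        fix x assume x: "x \<in> {0..k}"
        show "x \<in> cyc k ` {0..k}"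
        proof (cases x)
          case 0 then have "cyc k k = x" by (simp add: cyc_def)
          then show ?thesis by force
        next
          case (Suc y) then have "cyc k y = x" using x by (simp add: cyc_def)
          moreover have "y \<in> {0..k}" using Suc x by auto
          ultimately show ?thesis by blast
        qed
      qed
    qed
  qed
  show "\<And>x. x \<notin> {0..k} \<Longrightarrow> cyc k x = x" by (simp add: cyc_def)
qed

lemma pow_permutes: "p permutes S \<Longrightarrow> (p ^^ j) permutes S"
  by (induction j) (auto simp: permutes_id permutes_compose)

lemma numval_rot:
  "int (numval b k (g \<circ> (cyc k ^^ j))) = (\<Sum>i\<le>k. int (g ((i+j) mod Suc k)) * int b^i)"
  unfolding numval_def by (simp add: cyc_pow)

lemma comp_cancel:
  assumes "\<phi> permutes S" "\<psi> permutes S"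
  shows "(g \<circ> \<phi> \<circ> \<psi>) \<circ> (inv \<psi> \<circ> inv \<phi> \<circ> \<sigma> \<circ> \<phi> \<circ> \<psi>) = g \<circ> \<sigma> \<circ> \<phi> \<circ> \<psi>"
  using permutes_inverses(1)[OF assms(1)] permutes_inverses(1)[OF assms(2)]
  by (simp add: fun_eq_iff)

theorem theorem26:
  fixes n b k :: nat and d \<sigma> \<phi> :: "nat \<Rightarrow> nat"
  assumes "1 < n" and "n < b"
    and perm: "is_permutiple n b k d \<sigma>"
    and sym: "is_symmetry n b k d \<sigma> \<phi>"
    and fixS: "trans_seq (carry n b d \<sigma>) k \<phi> = trans_seq (carry n b d \<sigma>) k id"
  shows
    "(\<forall>j. j \<le> k \<and> carry n b d \<sigma> j = 0 \<longrightarrow>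
        is_symmetry n b k d \<sigma> (\<phi> \<circ> (cyc k ^^ j)) \<and>
        is_permutiple n b k (d \<circ> \<phi> \<circ> (cyc k ^^ j))
          (inv (cyc k ^^ j) \<circ> inv \<phi> \<circ> \<sigma> \<circ> \<phi> \<circ> (cyc k ^^ j)))
     \<and>
     (\<forall>j. 0 < j \<and> j \<le> k \<and> carry n b d \<sigma> j = n - 1 \<longrightarrow>
        is_permutiple n b k (dbar b \<circ> d \<circ> \<phi> \<circ> (cyc k ^^ j))
          (inv (cyc k ^^ j) \<circ> inv \<phi> \<circ> \<sigma> \<circ> \<phi> \<circ> (cyc k ^^ j)))"
proof -
  let ?c = "carry n b d \<sigma>"
  let ?c' = "carry n b d (\<sigma> \<circ> \<phi>)"
  have b0: "0 < b" and n0: "0 < n" using assms(1,2) by auto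
  have sp: "\<sigma> permutes {0..k}" and db: "\<forall>i\<le>k. d i < b"
    and eqs: "numval b k d = n * numval b k (d \<circ> \<sigma>)" using perm unfolding is_permutiple_def by auto
  have pp: "\<phi> permutes {0..k}" and eqp: "numval b k (d \<circ> \<phi>) = n * numval b k (d \<circ> (\<sigma> \<circ> \<phi>))"
    using sym unfolding is_symmetry_def by (auto simp: o_assoc)
  have sk: "\<sigma> i \<le> k" if "i \<le> k" for i using permutes_in_image[OF sp] that by auto
  have pk: "\<phi> i \<le> k" if "i \<le> k" for i using permutes_in_image[OF pp] that by auto
  have dsb: "\<forall>i\<le>k. d (\<sigma> i) < b" using db sk by auto
  have dpb: "\<forall>i\<le>k. d (\<phi> i) < b" using db pk by auto
  have dspb: "\<forall>i\<le>k. d ((\<sigma> \<circ> \<phi>) i) < b" using db sk pk by auto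
  have dpb': "\<forall>i\<le>k. (d \<circ> \<phi>) i < b" using dpb by simp
  note R1 = carry_rel[OF b0 n0 db dsb eqs]
  note R2 = carry_rel[OF b0 n0 dpb' dspb eqp]
  have cphi: "?c (\<phi> i) = ?c i" if "i \<le> k" for i
  proof -
    have "\<forall>x\<in>set [0..<Suc k]. (?c (\<phi> x), ?c (\<phi> (if x < k then x + 1 else 0)))
        = (?c (id x), ?c (id (if x < k then x + 1 else 0)))"
      using fixS unfolding trans_seq_def map_eq_conv .
    then show ?thesis using that by (auto simp del: upt_Suc)
  qed
  have cc: "?c' i = ?c i" if i: "i \<le> k" for i
  proof -
    have a: "n * d (\<sigma> (\<phi> i)) + ?c' i = d (\<phi> i) + b * ?c' (Suc i)" using R2(1) i by simp
    have bb: "n * d (\<sigma> (\<phi> i)) + ?c (\<phi> i) = d (\<phi> i) + b * ?c (Suc (\<phi> i))" using R1(1) pk[OF i] by simp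
    have "?c' i + b * ?c (Suc (\<phi> i)) = ?c i + b * ?c' (Suc i)" using a bb cphi[OF i] by linarith
    then have "(?c' i + b * ?c (Suc (\<phi> i))) mod b = (?c i + b * ?c' (Suc i)) mod b" by simp
    moreover have "?c' i < b" "?c i < b" using R1(3) R2(3) i assms(2) by (metis le_SucI less_trans)+
    ultimately show ?thesis by simp
  qed
  have relI: "\<forall>i\<le>k. int n * int (d (\<sigma> (\<phi> i))) + int (?c' i) = int (d (\<phi> i)) + int b * int (?c' (Suc i))"
    using R2(1) by (metis comp_apply of_nat_add of_nat_mult)
  have cp: "cyc k ^^ j permutes {0..k}" for j using pow_permutes[OF cyc_permutes] .
  have tp: "(inv (cyc k ^^ j) \<circ> inv \<phi> \<circ> \<sigma> \<circ> \<phi> \<circ> (cyc k ^^ j)) permutes {0..k}" for j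
    by (intro permutes_compose permutes_inv cp pp sp)
  have ck: "(cyc k ^^ j) i \<le> k" if "i \<le> k" for i j using that by (simp add: cyc_pow less_Suc_eq_le)
  have A: "is_symmetry n b k d \<sigma> (\<phi> \<circ> (cyc k ^^ j)) \<and>
        is_permutiple n b k (d \<circ> \<phi> \<circ> (cyc k ^^ j))
          (inv (cyc k ^^ j) \<circ> inv \<phi> \<circ> \<sigma> \<circ> \<phi> \<circ> (cyc k ^^ j))"
    if j: "j \<le> k" "?c j = 0" for j
  proof -
    have "int n * (\<Sum>i\<le>k. int (d (\<sigma> (\<phi> ((i+j) mod Suc k)))) * int b^i)
        = (\<Sum>i\<le>k. int (d (\<phi> ((i+j) mod Suc k))) * int b^i)"
      by (rule rot[OF relI]) (use R2(2) j cc in auto)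
    then have "int n * int (numval b k (d \<circ> \<sigma> \<circ> \<phi> \<circ> (cyc k ^^ j)))
        = int (numval b k (d \<circ> \<phi> \<circ> (cyc k ^^ j)))"
      by (simp only: numval_rot) simp
    then have E: "numval b k (d \<circ> \<phi> \<circ> (cyc k ^^ j)) = n * numval b k (d \<circ> \<sigma> \<circ> \<phi> \<circ> (cyc k ^^ j))"
      by (metis of_nat_eq_iff of_nat_mult)
    show ?thesis unfolding is_symmetry_def is_permutiple_def comp_cancel[OF pp cp]
      using E tp permutes_compose[OF cp pp] db pk ck by (auto simp: o_assoc)
  qed
  have B: "is_permutiple n b k (dbar b \<circ> d \<circ> \<phi> \<circ> (cyc k ^^ j))
          (inv (cyc k ^^ j) \<circ> inv \<phi> \<circ> \<sigma> \<circ> \<phi> \<circ> (cyc k ^^ j))"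
    if j: "0 < j" "j \<le> k" "?c j = n - 1" for j
  proof -
    have dbi: "int (dbar b x) = int b - 1 - int x" if "x < b" for x
      using that unfolding dbar_def by simp
    have relB: "\<forall>i\<le>k. int n * int (dbar b (d (\<sigma> (\<phi> i)))) + (int n - 1 - int (?c' i))
        = int (dbar b (d (\<phi> i))) + int b * (int n - 1 - int (?c' (Suc i)))"
    proof (intro allI impI)
      fix i assume i: "i \<le> k"
      have "int n * int (d (\<sigma> (\<phi> i))) + int (?c' i) = int (d (\<phi> i)) + int b * int (?c' (Suc i))"
        using relI i by blast
      then show "int n * int (dbar b (d (\<sigma> (\<phi> i)))) + (int n - 1 - int (?c' i))
        = int (dbar b (d (\<phi> i))) + int b * (int n - 1 - int (?c' (Suc i)))"
        using dbi[of "d (\<sigma> (\<phi> i))"] dbi[of "d (\<phi> i)"] dspb dpb i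
        by (simp add: right_diff_distrib distrib_left)
    qed
    have "int n * (\<Sum>i\<le>k. int (dbar b (d (\<sigma> (\<phi> ((i+j) mod Suc k))))) * int b^i)
        = (\<Sum>i\<le>k. int (dbar b (d (\<phi> ((i+j) mod Suc k)))) * int b^i)"
      by (rule rot[OF relB, where j=j]) (use R2(2) j cc n0 in auto)
    then have "int n * int (numval b k (dbar b \<circ> d \<circ> \<sigma> \<circ> \<phi> \<circ> (cyc k ^^ j)))
        = int (numval b k (dbar b \<circ> d \<circ> \<phi> \<circ> (cyc k ^^ j)))"
      by (simp only: numval_rot) simp
    then have E: "numval b k (dbar b \<circ> d \<circ> \<phi> \<circ> (cyc k ^^ j)) = n * numval b k (dbar b \<circ> d \<circ> \<sigma> \<circ> \<phi> \<circ> (cyc k ^^ j))"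
      by (metis of_nat_eq_iff of_nat_mult)
    show ?thesis unfolding is_permutiple_def comp_cancel[OF pp cp]
      using E tp b0 by (auto simp: dbar_def)
  qed
  show ?thesis using A B by blast
qed

end
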